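(* Let $N\ge2$, let $B=\{(s_k,\tilde s_k)\}_{0\le k<N}$ be a Pauli frame, let $p\in\mathcal P$, and let $i\ne j$ be qubits such that $(\lambda(s_i,p),\lambda(\tilde s_i,p))\ne(0,0)$ and $(\lambda(s_j,p),\lambda(\tilde s_j,p))\ne(0,0)$. For $\sigma,\tau\in\{X,Y,Z\}$ let $C(\sigma,\tau)_{ij}=\tfrac12(I+\sigma_i)+\tfrac12(I-\sigma_i)\tau_j$. Then among the nine gates $C(\sigma,\tau)_{ij}$, exactly four satisfy $\mathrm{Supp}(p,C(\sigma,\tau)_{ij}\cdot B)=\mathrm{Supp}(p,B)-1$, and the other five satisfy $\mathrm{Supp}(p,C(\sigma,\tau)_{ij}\cdot B)=\mathrm{Supp}(p,B)$.
   Context: Pauli space: $\mathcal P$ is the set of $N$-qubit Pauli operators modulo overall phase, an $\mathbb F_2$-vector space with addition given by product (mod phase); $\lambda(p,q)\in\mathbb F_2$ is $0$ if $p,q$ commute and $1$ otherwise. A Pauli frame is an ordered tuple $B=\{(s_k,\tilde s_k)\}_{0\le k<N}$ of elements of $\mathcal P$ with $\lambda(s_k,s_l)=\lambda(\tilde s_k,\tilde s_l)=0$, $\lambda(s_k,\tilde s_l)=\delta_{kl}$. For a frame $B$ let $\phi_B$ be the linear map of $\mathcal P$ with $\phi_B(Z_k)=s_k$, $\phi_B(X_k)=\tilde s_k$. The backward action of a Clifford unitary $V$ on $B$ is $V\cdot B:=\{(\phi_B(V^\dagger Z_kV),\phi_B(V^\dagger X_kV))\}_k$ (mod phase). Relative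 support: $\mathrm{Supp}(p,B)=\sum_k\big(\lambda(s_k,p)\vee\lambda(\tilde s_k,p)\big)$, with $\vee$ the logical OR and the sum over integers. *)

theory Defs
  imports Complex_Main "HOL-Library.Z2"
begin

text \<open>Qubits are indexed by a finite type 'n (N = CARD('n)).
  A Pauli operator modulo phase is represented by its symplectic coordinates
  (x, z) in F_2^N x F_2^N, standing for the operator X^x Z^z
  (tensor product over qubits).\<close>

type_synonym 'n pauli = "('n \<Rightarrow> bit) \<times> ('n \<Rightarrow> bit)"

text \<open>Operators on the N-qubit Hilbert space: complex matrices indexed by
  computational basis states ('n => bool).\<close>

type_synonym 'n op = "('n \<Rightarrow> bool) \<Rightarrow> ('n \<Rightarrow> bool) \<Rightarrow> complex"

definition mmult :: "('n::finite) op \<Rightarrow> 'n op \<Rightarrow> 'n op" where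
  "mmult A B = (\<lambda>a c. \<Sum>b\<in>UNIV. A a b * B b c)"

definition madd :: "'n op \<Rightarrow> 'n op \<Rightarrow> 'n op" where
  "madd A B = (\<lambda>a b. A a b + B a b)"

definition msub :: "'n op \<Rightarrow> 'n op \<Rightarrow> 'n op" where
  "msub A B = (\<lambda>a b. A a b - B a b)"

definition mscale :: "complex \<Rightarrow> 'n op \<Rightarrow> 'n op" where
  "mscale c A = (\<lambda>a b. c * A a b)"

definition mid :: "'n op" where
  "mid = (\<lambda>a b. if a = b then 1 else 0)"

definition madj :: "'n op \<Rightarrow> 'n op" where
  "madj A = (\<lambda>a b. cnj (A b a))"

text \<open>The operator X^x Z^z: it maps basis state |b> to (-1)^(z.b) |b + x>.\<close>

definition Pmat :: "'n pauli \<Rightarrow> 'n op" where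
  "Pmat p = (\<lambda>a b. if a = (\<lambda>k. b k \<noteq> (fst p k = 1))
                   then (-1) ^ card {k. snd p k = 1 \<and> b k} else 0)"

definition lam :: "('n::finite) pauli \<Rightarrow> 'n pauli \<Rightarrow> bit" where
  "lam p q = (if mmult (Pmat p) (Pmat q) = mmult (Pmat q) (Pmat p) then 0 else 1)"

definition pauli_class :: "'n op \<Rightarrow> 'n pauli" where
  "pauli_class M = (SOME p. \<exists>c. c \<noteq> 0 \<and> M = mscale c (Pmat p))"

definition unit_vec :: "'n \<Rightarrow> 'n \<Rightarrow> bit" where
  "unit_vec k = (\<lambda>m. if m = k then 1 else 0)"

definition Xp :: "'n \<Rightarrow> 'n pauli" where "Xp k = (unit_vec k, \<lambda>_. 0)"
definition Zp :: "'n \<Rightarrow> 'n pauli" where "Zp k = (\<lambda>_. 0, unit_vec k)"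

text \<open>A Pauli frame: (s, st) with s k = s_k and st k = tilde s_k.\<close>

type_synonym 'n frame = "('n \<Rightarrow> 'n pauli) \<times> ('n \<Rightarrow> 'n pauli)"

definition is_frame :: "('n::finite) frame \<Rightarrow> bool" where
  "is_frame B = (\<forall>k l. lam (fst B k) (fst B l) = 0 \<and> lam (snd B k) (snd B l) = 0
                       \<and> lam (fst B k) (snd B l) = (if k = l then 1 else 0))"

text \<open>The linear map phi_B with phi_B(Z_k) = s_k and phi_B(X_k) = tilde s_k.\<close>

definition phi :: "('n::finite) frame \<Rightarrow> 'n pauli \<Rightarrow> 'n pauli" where
  "phi B p =
     ((\<lambda>m. \<Sum>k\<in>UNIV. fst p k * fst (snd B k) m + snd p k * fst (fst B k) m),
      (\<lambda>m. \<Sum>k\<in>UNIV. fst p k * snd (snd B k) m + snd p k * snd (fst B k) m))"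

definition back_act :: "('n::finite) op \<Rightarrow> 'n frame \<Rightarrow> 'n frame" where
  "back_act V B =
     ((\<lambda>k. phi B (pauli_class (mmult (madj V) (mmult (Pmat (Zp k)) V)))),
      (\<lambda>k. phi B (pauli_class (mmult (madj V) (mmult (Pmat (Xp k)) V)))))"

definition Supp :: "('n::finite) pauli \<Rightarrow> 'n frame \<Rightarrow> nat" where
  "Supp p B = card {k. lam (fst B k) p = 1 \<or> lam (snd B k) p = 1}"

datatype sigma = SX | SY | SZ

definition sigma_op :: "sigma \<Rightarrow> 'n \<Rightarrow> 'n op" where
  "sigma_op s k = (case s of
       SX \<Rightarrow> Pmat (Xp k)
     | SY \<Rightarrow> mscale \<i> (Pmat (unit_vec k, unit_vec k))
     | SZ \<Rightarrow> Pmat (Zp k))"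

definition Cgate :: "sigma \<Rightarrow> sigma \<Rightarrow> 'n::finite \<Rightarrow> 'n \<Rightarrow> 'n op" where
  "Cgate s t i j =
     madd (mscale (1/2) (madd mid (sigma_op s i)))
          (mmult (mscale (1/2) (msub mid (sigma_op s i))) (sigma_op t j))"

end

theory Submission
  imports Defs
begin


declare add_bit_eq_xor[simp del] mult_bit_eq_and[simp del]

definition sg :: "bit \<Rightarrow> complex" where "sg b = (if b = 0 then 1 else -1)"

lemma sg_add: "sg (a + b) = sg a * sg b"
  by (cases a; cases b) (simp_all add: sg_def)
lemma sg_0[simp]: "sg 0 = 1" and sg_1[simp]: "sg 1 = -1" by (simp_all add: sg_def)
lemma sg_eq_iff: "sg a = sg b \<longleftrightarrow> a = b"
  by (cases a; cases b) (simp_all add: sg_def)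
lemma sg_nz[simp]: "sg a \<noteq> 0" by (simp add: sg_def)
lemma sg_sq[simp]: "sg a * sg a = 1" by (simp add: sg_def)

lemma bit_1_1[simp]: "(1::bit) + 1 = 0" by simp

lemma pow_m1_sg: "(-1::complex) ^ n = sg (of_nat n)"
  by (induction n) (simp_all add: sg_add)

lemma of_nat_card_bit: "finite A \<Longrightarrow> (of_nat (card A) :: bit) = (\<Sum>k\<in>A. 1)"
  by simp

lemma card_as_sum:
  fixes P :: "'n::finite \<Rightarrow> bool"
  shows "(of_nat (card {k. P k}) :: bit) = (\<Sum>k\<in>UNIV. of_bool (P k))"
proof -
  have "(\<Sum>k\<in>UNIV. (of_bool (P k)::bit)) = (\<Sum>k\<in>{k. P k}. 1)"
    by (simp add: sum.If_cases of_bool_def)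
  then show ?thesis by simp
qed

definition addb :: "('n \<Rightarrow> bool) \<Rightarrow> ('n \<Rightarrow> bit) \<Rightarrow> ('n \<Rightarrow> bool)" where
  "addb b x = (\<lambda>k. b k \<noteq> (x k = 1))"

definition zdot :: "('n::finite \<Rightarrow> bit) \<Rightarrow> ('n \<Rightarrow> bool) \<Rightarrow> bit" where
  "zdot z b = (\<Sum>k\<in>UNIV. z k * of_bool (b k))"

lemma Pmat_alt: "Pmat p = (\<lambda>a b. if a = addb b (fst p) then sg (zdot (snd p) b) else 0)"
proof -
  have "\<And>b. (-1::complex) ^ card {k. snd p k = 1 \<and> b k} = sg (zdot (snd p) b)"
  proof -
    fix b
    have "\<And>k. (of_bool (snd p k = 1 \<and> b k)::bit) = snd p k * of_bool (b k)"
      by (case_tac "snd p k") auto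
    then show "(-1::complex) ^ card {k. snd p k = 1 \<and> b k} = sg (zdot (snd p) b)"
      by (simp add: pow_m1_sg card_as_sum zdot_def)
  qed
  then show ?thesis unfolding Pmat_def addb_def by (auto intro!: ext)
qed




definition padd :: "'n pauli \<Rightarrow> 'n pauli \<Rightarrow> 'n pauli" where
  "padd p q = (\<lambda>k. fst p k + fst q k, \<lambda>k. snd p k + snd q k)"

definition zx :: "('n::finite) pauli \<Rightarrow> 'n pauli \<Rightarrow> bit" where
  "zx p q = (\<Sum>k\<in>UNIV. snd p k * fst q k)"

lemma addb_addb: "addb (addb c x) y = addb c (\<lambda>k. x k + y k)"
  unfolding addb_def by (rule ext) (case_tac "x k"; case_tac "y k"; simp)

lemma addb_eq_iff: "(b = addb a x) = (a = addb b x)"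
  unfolding addb_def by (auto simp: fun_eq_iff) 

lemma of_bool_addb: "(of_bool (addb c x k) :: bit) = of_bool (c k) + x k"
  unfolding addb_def by (cases "x k"; cases "c k"; simp)

lemma zdot_addb: "zdot z (addb c x) = zdot z c + (\<Sum>k\<in>UNIV. z k * x k)"
  unfolding zdot_def of_bool_addb by (simp add: distrib_left sum.distrib)

lemma zdot_add: "zdot (\<lambda>k. z k + w k) c = zdot z c + zdot w c"
  unfolding zdot_def by (simp add: distrib_right sum.distrib)

lemma sum_delta_mult: "(\<Sum>b\<in>UNIV. f b * (if b = d then g else (0::complex))) = f (d::'a::finite) * g"
proof -
  have "(\<Sum>b\<in>UNIV. f b * (if b = d then g else (0::complex))) = (\<Sum>b\<in>UNIV. if b = d then f b * g else 0)"
    by (rule sum.cong) auto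
  then show ?thesis by simp
qed

lemma Pmat_mult: "mmult (Pmat p) (Pmat q) = mscale (sg (zx p q)) (Pmat (padd p q))"
proof (rule ext, rule ext)
  fix a c
  have "mmult (Pmat p) (Pmat q) a c =
     (\<Sum>b\<in>UNIV. (if a = addb b (fst p) then sg (zdot (snd p) b) else 0) *
                 (if b = addb c (fst q) then sg (zdot (snd q) c) else 0))"
    unfolding mmult_def Pmat_alt by simp
  also have "\<dots> = (if a = addb (addb c (fst q)) (fst p) then sg (zdot (snd p) (addb c (fst q))) else 0) * sg (zdot (snd q) c)"
    by (rule sum_delta_mult)
  also have "\<dots> = mscale (sg (zx p q)) (Pmat (padd p q)) a c"
    unfolding mscale_def Pmat_alt padd_def addb_addb zdot_addb zx_def
    by (simp add: sg_add add.commute zdot_add)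
  finally show "mmult (Pmat p) (Pmat q) a c = mscale (sg (zx p q)) (Pmat (padd p q)) a c" .
qed

definition pzero :: "'n pauli" where "pzero = ((\<lambda>_. 0), (\<lambda>_. 0))"
lemma Pmat_0: "Pmat (pzero::('n::finite) pauli) = mid"
proof (rule ext, rule ext)
  fix a b
  have "sg (zdot (snd (pzero::('n::finite) pauli)) b) = 1" by (simp add: zdot_def pzero_def)
  moreover have "fst (pzero::('n::finite) pauli) = (\<lambda>_. 0)" by (simp add: pzero_def)
  ultimately show "Pmat (pzero::('n::finite) pauli) a b = mid a b"
    by (simp add: Pmat_alt mid_def addb_def)
qed

lemma madj_Pmat: "madj (Pmat p) = mscale (sg (zx p p)) (Pmat p)"
proof (rule ext, rule ext)
  fix a b
  have r: "cnj (sg x) = sg x" for x by (simp add: sg_def)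
  show "madj (Pmat p) a b = mscale (sg (zx p p)) (Pmat p) a b"
    unfolding madj_def mscale_def Pmat_alt
    apply (simp add: r addb_eq_iff)
    apply (auto simp: addb_eq_iff zdot_addb sg_add zx_def)
    done
qed




lemma Pmat_diag: "Pmat p (addb b (fst p)) b = sg (zdot (snd p) b)"
  by (simp add: Pmat_alt)

lemma Pmat_nz: "Pmat (p::('n::finite) pauli) \<noteq> (\<lambda>a b. 0)"
proof
  assume "Pmat p = (\<lambda>a b. 0)"
  then have "Pmat p (addb (\<lambda>_. False) (fst p)) (\<lambda>_. False) = 0" by simp
  then show False by (simp add: Pmat_diag)
qed

lemma mscale_cancel: "M \<noteq> (\<lambda>a b. 0) \<Longrightarrow> mscale c M = mscale d M \<Longrightarrow> c = d"
proof -
  assume "M \<noteq> (\<lambda>a b. 0)" and e: "mscale c M = mscale d M"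
  then obtain a b where "M a b \<noteq> 0" by (auto simp: fun_eq_iff)
  moreover have "c * M a b = d * M a b" using fun_cong[OF fun_cong[OF e, of a], of b] by (simp add: mscale_def)
  ultimately show "c = d" by simp
qed

lemma padd_comm: "padd p q = padd q p" by (simp add: padd_def add.commute)

lemma bit_eq_iff_add: "((a::bit) = b) = (a + b = 0)"
  by (cases a; cases b) simp_all

lemma lam_eq: "lam p q = zx p q + zx q p"
proof -
  have "(mmult (Pmat p) (Pmat q) = mmult (Pmat q) (Pmat p)) = (zx p q = zx q p)"
    unfolding Pmat_mult padd_comm[of q p]
    using mscale_cancel[OF Pmat_nz] by (metis sg_eq_iff)
  then show ?thesis unfolding lam_def by (auto simp: bit_eq_iff_add[symmetric])
qed

lemma zdot_false[simp]: "zdot z (\<lambda>_. False) = 0" by (simp add: zdot_def)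
lemma zdot_single: "zdot z (\<lambda>m. m = k) = z k"
proof -
  have "zdot z (\<lambda>m. m = k) = (\<Sum>m\<in>UNIV. if m = k then z k else 0)"
    unfolding zdot_def by (rule sum.cong) auto
  then show ?thesis by simp
qed

lemma addb_false: "addb (\<lambda>_. False) x = (\<lambda>k. x k = 1)" by (simp add: addb_def)

lemma Pmat_scaled_inj:
  fixes p q :: "('n::finite) pauli"
  assumes "c \<noteq> 0" "d \<noteq> 0" "mscale c (Pmat p) = mscale d (Pmat q)"
  shows "p = q"
proof -
  have e: "\<And>a b. c * Pmat p a b = d * Pmat q a b"
    using fun_cong[OF fun_cong[OF assms(3)]] by (simp add: mscale_def)
  let ?z = "(\<lambda>_. False) :: 'n \<Rightarrow> bool"
  have "c * Pmat p (addb ?z (fst p)) ?z \<noteq> 0" using assms(1) by (simp add: Pmat_diag)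
  then have "Pmat q (addb ?z (fst p)) ?z \<noteq> 0" using e by (metis mult_zero_right)
  then have "addb ?z (fst p) = addb ?z (fst q)" by (simp add: Pmat_alt split: if_splits)
  then have f0: "\<And>k. (fst p k = 1) = (fst q k = 1)" unfolding addb_false fun_eq_iff by blast
  have f: "fst p = fst q"
  proof
    fix k show "fst p k = fst q k" using f0[of k] by (cases "fst p k"; cases "fst q k") auto
  qed
  have e2: "c * sg (zdot (snd p) b) = d * sg (zdot (snd q) b)" for b
  proof -
    have "Pmat q (addb b (fst p)) b = sg (zdot (snd q) b)" using f Pmat_diag[of q] by simp
    then show ?thesis using e[of "addb b (fst p)" b] by (simp only: Pmat_diag)
  qed
  have cd: "c = d" using e2[of ?z] by simp
  have "snd p k = snd q k" for k
    using e2[of "\<lambda>m. m = k"] assms(1) cd by (simp add: zdot_single sg_eq_iff)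
  then have "snd p = snd q" by auto
  with f show ?thesis by (simp add: prod_eq_iff)
qed

lemma pauli_class_eq: "(c::complex) \<noteq> 0 \<Longrightarrow> pauli_class (mscale c (Pmat (p::('n::finite) pauli))) = p"
  unfolding pauli_class_def
proof (rule some_equality)
  assume "c \<noteq> 0"
  then show "\<exists>c'. c' \<noteq> 0 \<and> mscale c (Pmat p) = mscale c' (Pmat p)" by blast
next
  fix q assume "c \<noteq> 0" "\<exists>c'. c' \<noteq> 0 \<and> mscale c (Pmat p) = mscale c' (Pmat q)"
  then obtain c' where "c' \<noteq> 0" "mscale c (Pmat p) = mscale c' (Pmat q)" by blast
  then show "q = p" using Pmat_scaled_inj[OF \<open>c \<noteq> 0\<close>] by metis
qed




typedef ('n::finite) opr = "UNIV :: 'n op set" by auto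

setup_lifting type_definition_opr

lemma mmult_assoc: "mmult (mmult A B) C = mmult A (mmult B (C::('n::finite) op))"
proof (rule ext, rule ext)
  fix a d
  have "mmult (mmult A B) C a d = (\<Sum>c\<in>UNIV. \<Sum>b\<in>UNIV. A a b * B b c * C c d)"
    by (simp add: mmult_def sum_distrib_right)
  also have "\<dots> = (\<Sum>b\<in>UNIV. \<Sum>c\<in>UNIV. A a b * B b c * C c d)"
    by (rule sum.swap)
  also have "\<dots> = mmult A (mmult B C) a d"
    by (simp add: mmult_def sum_distrib_left mult.assoc)
  finally show "mmult (mmult A B) C a d = mmult A (mmult B C) a d" .
qed

lemma mmult_mid_left: "mmult mid A = (A::('n::finite) op)"
proof (rule ext, rule ext)
  fix a c
  have "mmult mid A a c = (\<Sum>b\<in>UNIV. if b = a then A b c else 0)"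
    unfolding mmult_def mid_def by (rule sum.cong) auto
  then show "mmult mid A a c = A a c" by simp
qed

lemma mmult_mid_right: "mmult A mid = (A::('n::finite) op)"
proof (rule ext, rule ext)
  fix a c
  have "mmult A mid a c = (\<Sum>b\<in>UNIV. if b = c then A a b else 0)"
    unfolding mmult_def mid_def by (rule sum.cong) auto
  then show "mmult A mid a c = A a c" by simp
qed

instantiation opr :: (finite) real_algebra_1
begin
lift_definition zero_opr :: "'a opr" is "\<lambda>a b. 0" .
lift_definition one_opr :: "'a opr" is "mid" .
lift_definition plus_opr :: "'a opr \<Rightarrow> 'a opr \<Rightarrow> 'a opr" is madd .
lift_definition minus_opr :: "'a opr \<Rightarrow> 'a opr \<Rightarrow> 'a opr" is msub .
lift_definition uminus_opr :: "'a opr \<Rightarrow> 'a opr" is "\<lambda>A a b. - A a b" .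
lift_definition times_opr :: "'a opr \<Rightarrow> 'a opr \<Rightarrow> 'a opr" is mmult .
lift_definition scaleR_opr :: "real \<Rightarrow> 'a opr \<Rightarrow> 'a opr" is "\<lambda>r. mscale (complex_of_real r)" .
instance
proof
  fix a b c :: "'a opr" and r s :: real
  show "a + b + c = a + (b + c)" by transfer (simp add: madd_def add.assoc)
  show "a + b = b + a" by transfer (simp add: madd_def add.commute)
  show "0 + a = a" by transfer (simp add: madd_def)
  show "- a + a = 0" by transfer (simp add: madd_def)
  show "a - b = a + - b" by transfer (simp add: madd_def msub_def)
  show "r *\<^sub>R (a + b) = r *\<^sub>R a + r *\<^sub>R b" by transfer (simp add: madd_def mscale_def distrib_left)
  show "(r + s) *\<^sub>R a = r *\<^sub>R a + s *\<^sub>R a" by transfer (simp add: madd_def mscale_def distrib_right)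
  show "r *\<^sub>R s *\<^sub>R a = (r * s) *\<^sub>R a" by transfer (simp add: mscale_def mult.assoc)
  show "1 *\<^sub>R a = a" by transfer (simp add: mscale_def)
  show "a * b * c = a * (b * c)"
    by transfer (rule mmult_assoc)
  show "(a + b) * c = a * c + b * c"
    by transfer (simp add: mmult_def madd_def distrib_right sum.distrib)
  show "a * (b + c) = a * b + a * c"
    by transfer (simp add: mmult_def madd_def distrib_left sum.distrib)
  show "1 * a = a" by transfer (rule mmult_mid_left)
  show "a * 1 = a" by transfer (rule mmult_mid_right)
  show "r *\<^sub>R a * b = r *\<^sub>R (a * b)" by transfer (simp add: mmult_def mscale_def sum_distrib_left mult.assoc)
  show "a * r *\<^sub>R b = r *\<^sub>R (a * b)" by transfer (simp add: mmult_def mscale_def sum_distrib_left mult.left_commute)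
  show "(0::'a opr) \<noteq> 1"
  proof transfer
    show "(\<lambda>a b. 0) \<noteq> (mid::'a op)"
    proof
      assume h: "(\<lambda>a b. 0) = (mid::'a op)"
      have "(0::complex) = (mid::'a op) (\<lambda>_. False) (\<lambda>_. False)" using fun_cong[OF fun_cong[OF h, of "\<lambda>_. False"], of "\<lambda>_. False"] by simp
      then show False by (simp add: mid_def)
    qed
  qed
qed
end




lemma ctx: "(x::'a::ring_1) * y = z \<Longrightarrow> x * (y * w) = z * w"
  by (simp add: mult.assoc[symmetric])

locale gate_alg =
  fixes S T :: "'a::real_algebra_1"
  assumes SS: "S * S = 1" and TT: "T * T = 1" and ST: "S * T = T * S"
begin
definition "A = (1/2) *\<^sub>R (1 + S)"
definition "B = (1/2) *\<^sub>R (1 - S)"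
definition "V = A + B * T"

lemma sq1: "(1 + S) * (1 + S) = 2 *\<^sub>R (1 + S)"
proof -
  have "(1 + S) * (1 + S) = (1 + S) + (1 + S)" by (simp add: algebra_simps SS)
  then show ?thesis by (simp add: scaleR_2)
qed
lemma sq2: "(1 - S) * (1 - S) = 2 *\<^sub>R (1 - S)"
proof -
  have "(1 - S) * (1 - S) = (1 - S) + (1 - S)" by (simp add: algebra_simps SS)
  then show ?thesis by (simp add: scaleR_2)
qed
lemma AA: "A * A = A" unfolding A_def by (simp add: sq1)
lemma BB: "B * B = B" unfolding B_def by (simp add: sq2)
lemma AB: "A * B = 0" unfolding A_def B_def
proof -
  have "(1 + S) * (1 - S) = 0" by (simp add: algebra_simps SS)
  then show "(1 / 2) *\<^sub>R (1 + S) * (1 / 2) *\<^sub>R (1 - S) = 0" by simp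
qed
lemma BA: "B * A = 0" unfolding A_def B_def
proof -
  have "(1 - S) * (1 + S) = 0" by (simp add: algebra_simps SS)
  then show "(1 / 2) *\<^sub>R (1 - S) * (1 / 2) *\<^sub>R (1 + S) = 0" by simp
qed
lemma TA: "T * A = A * T" unfolding A_def by (simp add: algebra_simps ST)
lemma TB: "T * B = B * T" unfolding B_def by (simp add: algebra_simps ST)
lemma ApB: "A + B = 1" unfolding A_def B_def
proof -
  have "(1/2) *\<^sub>R (1 + S) + (1/2) *\<^sub>R (1 - S) = (1/2) *\<^sub>R ((1 + S) + (1 - S))"
    by (simp only: scaleR_add_right)
  also have "(1 + S) + (1 - S) = 2 *\<^sub>R (1::'a)" by (simp add: scaleR_2)
  finally show "(1/2) *\<^sub>R (1 + S) + (1/2) *\<^sub>R (1 - S) = 1" by simp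
qed
lemma AmB: "A - B = S" unfolding A_def B_def
proof -
  have "(1/2) *\<^sub>R (1 + S) - (1/2) *\<^sub>R (1 - S) = (1/2) *\<^sub>R ((1 + S) - (1 - S))"
    by (simp only: scaleR_diff_right)
  also have "(1 + S) - (1 - S) = 2 *\<^sub>R S" by (simp add: scaleR_2)
  finally show "(1/2) *\<^sub>R (1 + S) - (1/2) *\<^sub>R (1 - S) = S" by simp
qed

lemmas basic = AA BB AB BA TA TB TT ctx[OF AA] ctx[OF BB] ctx[OF AB] ctx[OF BA] ctx[OF TA] ctx[OF TB] ctx[OF TT]

lemma VV: "V * V = 1"
proof -
  have "V * V = A + B * (T * T)" unfolding V_def by (simp add: algebra_simps basic)
  then show ?thesis by (simp add: TT ApB)
qed

lemma case1: assumes "P * S = S * P" "P * T = T * P" shows "V * (P * V) = P"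
proof -
  have PA: "P * A = A * P" unfolding A_def using assms by (simp add: algebra_simps)
  have PB: "P * B = B * P" unfolding B_def using assms by (simp add: algebra_simps)
  have "P * V = V * P" unfolding V_def using PA PB assms(2) by (simp add: algebra_simps ctx[OF PB])
  then show ?thesis by (simp add: mult.assoc[symmetric] VV)
qed

lemma case2: assumes "P * S = S * P" "P * T = - (T * P)" shows "V * (P * V) = S * P"
proof -
  have PA: "P * A = A * P" unfolding A_def using assms by (simp add: algebra_simps)
  have PB: "P * B = B * P" unfolding B_def using assms by (simp add: algebra_simps)
  have "P * V = (A - B * T) * P" unfolding V_def using PA PB assms(2) by (simp add: algebra_simps ctx[OF PB])
  then have "V * (P * V) = (A + B * T) * (A - B * T) * P" by (simp add: V_def mult.assoc)
  also have "(A + B * T) * (A - B * T) = A - B * (T * T)" by (simp add: algebra_simps basic)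
  finally show ?thesis by (simp add: TT AmB)
qed

lemma case3: assumes "P * S = - (S * P)" "P * T = T * P" shows "V * (P * V) = P * T"
proof -
  have PA: "P * A = B * P" unfolding A_def B_def using assms by (simp add: algebra_simps)
  have PB: "P * B = A * P" unfolding A_def B_def using assms by (simp add: algebra_simps)
  have "P * V = (B + A * T) * P" unfolding V_def using PA PB assms(2) by (simp add: algebra_simps ctx[OF PB])
  then have "V * (P * V) = (A + B * T) * (B + A * T) * P" by (simp add: V_def mult.assoc)
  also have "(A + B * T) * (B + A * T) = (A + B) * T" by (simp add: algebra_simps basic)
  finally have "V * (P * V) = T * P" by (simp add: ApB)
  then show ?thesis using assms(2) by simp
qed

lemma case4: assumes "P * S = - (S * P)" "P * T = - (T * P)" shows "V * (P * V) = - (P * (S * T))"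
proof -
  have PA: "P * A = B * P" unfolding A_def B_def using assms by (simp add: algebra_simps)
  have PB: "P * B = A * P" unfolding A_def B_def using assms by (simp add: algebra_simps)
  have "P * V = (B - A * T) * P" unfolding V_def using PA PB assms(2) by (simp add: algebra_simps ctx[OF PB])
  then have "V * (P * V) = (A + B * T) * (B - A * T) * P" by (simp add: V_def mult.assoc)
  also have "(A + B * T) * (B - A * T) = (B - A) * T" by (simp add: algebra_simps basic)
  also have "B - A = - S" using AmB by (simp add: algebra_simps)
  finally have 1: "V * (P * V) = - (S * T * P)" by simp
  have "P * (S * T) = (P * S) * T" by (simp add: mult.assoc)
  also have "\<dots> = - (S * (P * T))" using assms(1) by (simp add: mult.assoc)
  also have "\<dots> = S * (T * P)" using assms(2) by simp
  finally have "P * (S * T) = S * T * P" by (simp add: mult.assoc)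
  with 1 show ?thesis by simp
qed
end




lemma mmult_mscale_left: "mmult (mscale c A) B = mscale c (mmult A (B::('n::finite) op))"
  by (simp add: mmult_def mscale_def sum_distrib_left mult.assoc)
lemma mmult_mscale_right: "mmult A (mscale c B) = mscale c (mmult A (B::('n::finite) op))"
  by (simp add: mmult_def mscale_def sum_distrib_left mult.left_commute)
lemma mscale_mscale: "mscale c (mscale d A) = mscale (c * d) A"
  by (simp add: mscale_def mult.assoc)
lemma madj_mscale: "madj (mscale c A) = mscale (cnj c) (madj A)"
  by (simp add: madj_def mscale_def)
lemma madj_mmult: "madj (mmult A B) = mmult (madj B) (madj (A::('n::finite) op))"
  by (simp add: madj_def mmult_def mult.commute)
lemma madj_madd: "madj (madd A B) = madd (madj A) (madj B)"
  by (simp add: madj_def madd_def)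
lemma madj_msub: "madj (msub A B) = msub (madj A) (madj B)"
  by (simp add: madj_def msub_def)
lemma madj_mid: "madj mid = mid"
  by (simp add: madj_def mid_def fun_eq_iff)

lift_definition adj :: "('n::finite) opr \<Rightarrow> 'n opr" is madj .

lemma adj_add: "adj (x + y) = adj x + adj y" by transfer (rule madj_madd)
lemma adj_diff: "adj (x - y) = adj x - adj y" by transfer (rule madj_msub)
lemma adj_mult: "adj (x * y) = adj y * adj x" by transfer (rule madj_mmult)
lemma adj_one: "adj 1 = 1" by transfer (rule madj_mid)
lemma adj_scaleR: "adj (r *\<^sub>R x) = r *\<^sub>R adj x" by transfer (simp add: madj_mscale)

lemma Rep_uminus: "Rep_opr (- x) = mscale (-1) (Rep_opr x)"
  by (simp add: uminus_opr.rep_eq mscale_def)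




definition vec_of :: "sigma \<Rightarrow> 'n \<Rightarrow> 'n pauli" where
  "vec_of s k = (case s of SX \<Rightarrow> Xp k | SY \<Rightarrow> (unit_vec k, unit_vec k) | SZ \<Rightarrow> Zp k)"
definition coef :: "sigma \<Rightarrow> complex" where
  "coef s = (case s of SY \<Rightarrow> \<i> | _ \<Rightarrow> 1)"

lemma mscale_1: "mscale 1 A = A" by (simp add: mscale_def)

lemma sigma_op_eq: "sigma_op s k = mscale (coef s) (Pmat (vec_of s k))"
  by (cases s) (simp_all add: sigma_op_def coef_def vec_of_def mscale_1)

lemma coef_nz: "coef s \<noteq> 0" by (cases s) (simp_all add: coef_def)

lemma vec_supp: "m \<noteq> k \<Longrightarrow> fst (vec_of s k) m = 0 \<and> snd (vec_of s k) m = 0"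
  by (cases s) (simp_all add: vec_of_def Xp_def Zp_def unit_vec_def)

lemma zx_vec_diff: "i \<noteq> j \<Longrightarrow> zx (vec_of s i) (vec_of t (j::'n::finite)) = 0"
proof -
  assume ij: "i \<noteq> j"
  have "\<And>m. snd (vec_of s i) m * fst (vec_of t j) m = 0"
  proof -
    fix m show "snd (vec_of s i) m * fst (vec_of t j) m = 0"
      using vec_supp[of m i s] vec_supp[of m j t] ij by (cases "m = i") auto
  qed
  then show ?thesis unfolding zx_def by (intro sum.neutral) blast
qed

lemma sum_single: "(\<Sum>m\<in>(UNIV::'n::finite set). if m = k then c else 0) = (c::bit)"
  by simp

lemma sum_unit: "(\<Sum>m\<in>UNIV. unit_vec (k::'n::finite) m) = (1::bit)"
  by (simp add: unit_vec_def)
lemma unit_sq: "unit_vec k m * unit_vec k m = unit_vec k m"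
  by (simp add: unit_vec_def)

lemma zx_vec_same: "zx (vec_of s k) (vec_of s (k::'n::finite)) = (if s = SY then 1 else 0)"
  by (cases s) (simp_all add: zx_def vec_of_def Xp_def Zp_def unit_sq sum_unit)

lemma padd_self: "padd p p = pzero"
  by (simp add: padd_def pzero_def)

lemma Pmat_comm: "mmult (Pmat p) (Pmat q) = mscale (sg (lam p q)) (mmult (Pmat q) (Pmat (p::('n::finite) pauli)))"
proof -
  have "sg (zx p q) = sg (zx p q + zx q p) * sg (zx q p)"
    by (simp add: sg_add mult.assoc)
  then show ?thesis by (simp add: Pmat_mult lam_eq mscale_mscale padd_comm[of q p])
qed

lemma sig_sq: "mmult (sigma_op s k) (sigma_op s (k::'n::finite)) = mid"
proof -
  have "coef s * (coef s * sg (zx (vec_of s k) (vec_of s k))) = 1"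
    by (cases s) (simp_all add: coef_def zx_vec_same)
  then show ?thesis
    by (simp add: sigma_op_eq mmult_mscale_left mmult_mscale_right Pmat_mult mscale_mscale padd_self Pmat_0 mscale_1)
qed

lemma sig_comm: "i \<noteq> j \<Longrightarrow> mmult (sigma_op s i) (sigma_op t (j::'n::finite)) = mmult (sigma_op t j) (sigma_op s i)"
  by (simp add: sigma_op_eq mmult_mscale_left mmult_mscale_right Pmat_mult zx_vec_diff mscale_mscale mult.commute padd_comm[of "vec_of t j"])

lemma sig_adj: "madj (sigma_op s (k::'n::finite)) = sigma_op s k"
proof -
  have "cnj (coef s) * sg (zx (vec_of s k) (vec_of s k)) = coef s"
    by (cases s) (simp_all add: coef_def zx_vec_same)
  then show ?thesis by (simp add: sigma_op_eq madj_mscale madj_Pmat mscale_mscale)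
qed




lemma Rep_Abs: "Rep_opr (Abs_opr M) = M" by (simp add: Abs_opr_inverse)

lemma opr_comm:
  assumes "Rep_opr x = mscale c (Pmat p)" "Rep_opr y = mscale d (Pmat (q::('n::finite) pauli))"
  shows "x * y = (if lam p q = 0 then y * x else - (y * x))"
proof -
  have "Rep_opr (x * y) = mscale (c * d) (mmult (Pmat p) (Pmat q))"
    by (simp add: times_opr.rep_eq assms mmult_mscale_left mmult_mscale_right mscale_mscale mult.commute)
  also have "\<dots> = mscale (sg (lam p q)) (mscale (d * c) (mmult (Pmat q) (Pmat p)))"
    unfolding Pmat_comm[of p q] mscale_mscale by (simp add: mult_ac)
  also have "mscale (d * c) (mmult (Pmat q) (Pmat p)) = Rep_opr (y * x)"
    by (simp add: times_opr.rep_eq assms mmult_mscale_left mmult_mscale_right mscale_mscale mult.commute)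
  finally have e: "Rep_opr (x * y) = mscale (sg (lam p q)) (Rep_opr (y * x))" .
  show ?thesis
  proof (cases "lam p q = 0")
    case True then show ?thesis using e by (simp add: mscale_1 Rep_opr_inject[symmetric])
  next
    case False then have "lam p q = 1" by simp
    then show ?thesis using e by (simp add: Rep_uminus Rep_opr_inject[symmetric])
  qed
qed

lemma conj_class:
  fixes P0 :: "('n::finite) pauli" and i j :: 'n
  assumes ij: "i \<noteq> j"
  shows "pauli_class (mmult (madj (Cgate s t i j)) (mmult (Pmat P0) (Cgate s t i j))) =
    (if lam P0 (vec_of s i) = 0 then (if lam P0 (vec_of t j) = 0 then P0 else padd (vec_of s i) P0)
     else (if lam P0 (vec_of t j) = 0 then padd P0 (vec_of t j) else padd P0 (padd (vec_of s i) (vec_of t j))))"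
proof -
  define S where "S = (Abs_opr (sigma_op s i) :: 'n opr)"
  define T where "T = (Abs_opr (sigma_op t j) :: 'n opr)"
  define P where "P = (Abs_opr (Pmat P0) :: 'n opr)"
  have RS: "Rep_opr S = mscale (coef s) (Pmat (vec_of s i))" by (simp add: S_def Rep_Abs sigma_op_eq)
  have RT: "Rep_opr T = mscale (coef t) (Pmat (vec_of t j))" by (simp add: T_def Rep_Abs sigma_op_eq)
  have RP: "Rep_opr P = mscale 1 (Pmat P0)" by (simp add: P_def Rep_Abs mscale_1)
  have SS: "S * S = 1" by (simp add: Rep_opr_inject[symmetric] times_opr.rep_eq one_opr.rep_eq S_def Rep_Abs sig_sq)
  have TT: "T * T = 1" by (simp add: Rep_opr_inject[symmetric] times_opr.rep_eq one_opr.rep_eq T_def Rep_Abs sig_sq)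
  have ST: "S * T = T * S" by (simp add: Rep_opr_inject[symmetric] times_opr.rep_eq S_def T_def Rep_Abs sig_comm[OF ij])
  interpret g: gate_alg S T using SS TT ST by unfold_locales
  have RS': "Rep_opr S = sigma_op s i" by (simp add: S_def Rep_Abs)
  have RT': "Rep_opr T = sigma_op t j" by (simp add: T_def Rep_Abs)
  have CV: "Cgate s t i j = Rep_opr g.V"
    unfolding g.V_def g.A_def g.B_def plus_opr.rep_eq times_opr.rep_eq scaleR_opr.rep_eq
        minus_opr.rep_eq one_opr.rep_eq RS' RT' Cgate_def by simp
  have aS: "adj S = S" by (simp add: Rep_opr_inject[symmetric] adj.rep_eq S_def Rep_Abs sig_adj)
  have aT: "adj T = T" by (simp add: Rep_opr_inject[symmetric] adj.rep_eq T_def Rep_Abs sig_adj)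
  have aA: "adj g.A = g.A" by (simp add: g.A_def adj_scaleR adj_add adj_one aS)
  have aB: "adj g.B = g.B" by (simp add: g.B_def adj_scaleR adj_diff adj_one aS)
  have aV: "adj g.V = g.V" by (simp add: g.V_def adj_add adj_mult aA aB aT g.TB)
  have M: "mmult (madj (Cgate s t i j)) (mmult (Pmat P0) (Cgate s t i j)) = Rep_opr (g.V * (P * g.V))"
  proof -
    have "Rep_opr (adj g.V * (P * g.V)) = mmult (madj (Cgate s t i j)) (mmult (Pmat P0) (Cgate s t i j))"
      by (simp add: times_opr.rep_eq adj.rep_eq CV P_def Rep_Abs)
    then show ?thesis using aV by simp
  qed
  have PS: "P * S = (if lam P0 (vec_of s i) = 0 then S * P else - (S * P))" by (rule opr_comm[OF RP RS])
  have PT: "P * T = (if lam P0 (vec_of t j) = 0 then T * P else - (T * P))" by (rule opr_comm[OF RP RT])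
  have cs: "coef s \<noteq> 0" "coef t \<noteq> 0" by (simp_all add: coef_nz)
  show ?thesis
  proof (cases "lam P0 (vec_of s i) = 0"; cases "lam P0 (vec_of t j) = 0")
    assume a: "lam P0 (vec_of s i) = 0" "lam P0 (vec_of t j) = 0"
    then have "g.V * (P * g.V) = P" using PS PT g.case1 by simp
    then show ?thesis using a by (simp add: M P_def Rep_Abs pauli_class_eq[of 1, simplified mscale_1])
  next
    assume a: "lam P0 (vec_of s i) = 0" "lam P0 (vec_of t j) \<noteq> 0"
    then have "g.V * (P * g.V) = S * P" using PS PT g.case2 by simp
    moreover have "Rep_opr (S * P) = mscale (coef s * sg (zx (vec_of s i) P0)) (Pmat (padd (vec_of s i) P0))"
      by (simp add: times_opr.rep_eq RS P_def Rep_Abs mmult_mscale_left Pmat_mult mscale_mscale)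
    ultimately show ?thesis using a cs by (simp add: M pauli_class_eq)
  next
    assume a: "lam P0 (vec_of s i) \<noteq> 0" "lam P0 (vec_of t j) = 0"
    then have "g.V * (P * g.V) = P * T" using PS PT g.case3 by simp
    moreover have "Rep_opr (P * T) = mscale (coef t * sg (zx P0 (vec_of t j))) (Pmat (padd P0 (vec_of t j)))"
      by (simp add: times_opr.rep_eq RT P_def Rep_Abs mmult_mscale_right Pmat_mult mscale_mscale)
    ultimately show ?thesis using a cs by (simp add: M pauli_class_eq)
  next
    assume a: "lam P0 (vec_of s i) \<noteq> 0" "lam P0 (vec_of t j) \<noteq> 0"
    then have "g.V * (P * g.V) = - (P * (S * T))" using PS PT g.case4 by simp
    moreover have "Rep_opr (- (P * (S * T))) = mscale (- (coef s * coef t * sg (zx (vec_of s i) (vec_of t j)) * sg (zx P0 (padd (vec_of s i) (vec_of t j)))))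
         (Pmat (padd P0 (padd (vec_of s i) (vec_of t j))))"
      by (simp add: Rep_uminus times_opr.rep_eq RS RT P_def Rep_Abs mmult_mscale_right mmult_mscale_left Pmat_mult mscale_mscale mult_ac)
    ultimately show ?thesis using a cs by (simp add: M pauli_class_eq)
  qed
qed




definition xsg :: "sigma \<Rightarrow> bit" where "xsg s = (case s of SZ \<Rightarrow> 0 | _ \<Rightarrow> 1)"
definition zsg :: "sigma \<Rightarrow> bit" where "zsg s = (case s of SX \<Rightarrow> 0 | _ \<Rightarrow> 1)"

definition nfun :: "bit \<Rightarrow> bit \<Rightarrow> bit \<Rightarrow> bit \<Rightarrow> sigma \<Rightarrow> sigma \<Rightarrow> nat" where
  "nfun ai bi aj bj s t =
    (let Lt = xsg t * bj + zsg t * aj; Ls = xsg s * bi + zsg s * ai in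
     (if ai + xsg s * Lt = 1 \<or> bi + zsg s * Lt = 1 then 1 else 0) +
     (if aj + xsg t * Ls = 1 \<or> bj + zsg t * Ls = 1 then 1 else 0))"

definition allpairs :: "(sigma \<times> sigma) list" where
  "allpairs = [(SX,SX),(SX,SY),(SX,SZ),(SY,SX),(SY,SY),(SY,SZ),(SZ,SX),(SZ,SY),(SZ,SZ)]"

lemma card_pairs: "card {(s,t). P s t} = length (filter (\<lambda>(s,t). P s t) allpairs)"
proof -
  have "{(s,t). P s t} = set (filter (\<lambda>(s,t). P s t) allpairs)"
  proof (rule set_eqI)
    fix x :: "sigma \<times> sigma"
    show "x \<in> {(s,t). P s t} \<longleftrightarrow> x \<in> set (filter (\<lambda>(s,t). P s t) allpairs)"
      by (cases x; rename_tac a b; case_tac a; case_tac b) (auto simp: allpairs_def)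
  qed
  moreover have "distinct (filter (\<lambda>(s,t). P s t) allpairs)" by (simp add: allpairs_def)
  ultimately show ?thesis by (metis distinct_card)
qed

lemma count:
  assumes "(ai, bi) \<noteq> (0, 0)" "(aj, bj) \<noteq> (0, 0)"
  shows "card {(s,t). nfun ai bi aj bj s t = 1} = 4 \<and> card {(s,t). nfun ai bi aj bj s t = 2} = 5"
  using assms unfolding card_pairs
  by (cases ai; cases bi; cases aj; cases bj) (simp_all add: allpairs_def nfun_def xsg_def zsg_def Let_def)




definition Lf :: "('n::finite) frame \<Rightarrow> 'n pauli \<Rightarrow> 'n pauli \<Rightarrow> bit" where
  "Lf B p u = (\<Sum>m\<in>UNIV. fst u m * lam (snd B m) p + snd u m * lam (fst B m) p)"

lemma phi_lam: "lam (phi B u) p = Lf B p u"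
proof -
  define X where "X m k = fst u m * snd (snd B m) k + snd u m * snd (fst B m) k" for m k
  define Y where "Y m k = fst u m * fst (snd B m) k + snd u m * fst (fst B m) k" for m k
  have "lam (phi B u) p = (\<Sum>k\<in>UNIV. (\<Sum>m\<in>UNIV. X m k) * fst p k) + (\<Sum>k\<in>UNIV. snd p k * (\<Sum>m\<in>UNIV. Y m k))"
    by (simp add: lam_eq zx_def phi_def X_def Y_def)
  also have "\<dots> = (\<Sum>k\<in>UNIV. \<Sum>m\<in>UNIV. X m k * fst p k + snd p k * Y m k)"
    by (simp add: sum_distrib_left sum_distrib_right sum.distrib)
  also have "\<dots> = (\<Sum>m\<in>UNIV. \<Sum>k\<in>UNIV. X m k * fst p k + snd p k * Y m k)"
    by (rule sum.swap)
  also have "\<dots> = Lf B p u"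
    unfolding Lf_def lam_eq zx_def
  proof (rule sum.cong[OF refl])
    fix m
    show "(\<Sum>k\<in>UNIV. X m k * fst p k + snd p k * Y m k) =
      fst u m * ((\<Sum>k\<in>UNIV. snd (snd B m) k * fst p k) + (\<Sum>k\<in>UNIV. snd p k * fst (snd B m) k)) +
      snd u m * ((\<Sum>k\<in>UNIV. snd (fst B m) k * fst p k) + (\<Sum>k\<in>UNIV. snd p k * fst (fst B m) k))"
      by (simp add: X_def Y_def sum_distrib_left sum.distrib algebra_simps)
  qed
  finally show ?thesis .
qed

lemma Lf_padd: "Lf B p (padd u v) = Lf B p u + Lf B p v"
  by (simp add: Lf_def padd_def algebra_simps sum.distrib)

lemma sum_unit_mult: "(\<Sum>m\<in>UNIV. unit_vec (k::'n::finite) m * f m) = (f k :: bit)"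
proof -
  have "(\<Sum>m\<in>UNIV. unit_vec k m * f m) = (\<Sum>m\<in>UNIV. if m = k then f k else 0)"
    by (rule sum.cong) (auto simp: unit_vec_def)
  then show ?thesis by simp
qed

lemma sum_unit_mult2: "(\<Sum>m\<in>UNIV. f m * unit_vec (k::'n::finite) m) = (f k :: bit)"
  using sum_unit_mult[of k f] by (simp add: mult.commute)

lemma Lf_Z: "Lf B p (Zp k) = lam (fst B k) p"
  by (simp add: Lf_def Zp_def sum_unit_mult)
lemma Lf_X: "Lf B p (Xp k) = lam (snd B k) p"
  by (simp add: Lf_def Xp_def sum_unit_mult)
lemma Lf_vec: "Lf B p (vec_of s i) = xsg s * lam (snd B i) p + zsg s * lam (fst B i) p"
  by (cases s) (simp_all add: Lf_def vec_of_def Xp_def Zp_def sum_unit_mult xsg_def zsg_def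
       sum.distrib distrib_right)

lemma lam_Z: "lam (Zp k) v = fst v (k::'n::finite)"
  by (simp add: lam_eq zx_def Zp_def mult.commute[of _ "unit_vec k _"] sum_unit_mult)
lemma lam_X: "lam (Xp k) v = snd v (k::'n::finite)"
  by (simp add: lam_eq zx_def Xp_def sum_unit_mult2)

lemma vec_fst: "fst (vec_of s i) k = (if k = i then xsg s else 0)"
  by (cases s) (simp_all add: vec_of_def Xp_def Zp_def unit_vec_def xsg_def)
lemma vec_snd: "snd (vec_of s i) k = (if k = i then zsg s else 0)"
  by (cases s) (simp_all add: vec_of_def Xp_def Zp_def unit_vec_def zsg_def)

lemma L_conj:
  fixes i j :: "'n::finite"
  assumes "i \<noteq> j"
  shows "lam (phi B (pauli_class (mmult (madj (Cgate s t i j)) (mmult (Pmat P0) (Cgate s t i j))))) p =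
     Lf B p P0 + lam P0 (vec_of t j) * Lf B p (vec_of s i) + lam P0 (vec_of s i) * Lf B p (vec_of t j)"
  unfolding phi_lam conj_class[OF assms]
  by (cases "lam P0 (vec_of s i)"; cases "lam P0 (vec_of t j)") (simp_all add: Lf_padd algebra_simps)




lemma card_split:
  assumes "finite X" "i \<noteq> j"
  shows "card X = card (X - {i,j}) + (if i \<in> X then 1 else 0) + (if j \<in> X then 1 else 0)"
proof -
  have u: "X = (X - {i,j}) \<union> (X \<inter> {i,j})" by blast
  have "card X = card (X - {i,j}) + card (X \<inter> {i,j})"
    by (subst u, rule card_Un_disjoint) (use assms in auto)
  moreover have "card (X \<inter> {i,j}) = (if i \<in> X then 1 else 0) + (if j \<in> X then 1 else 0)"
  proof (cases "i \<in> X"; cases "j \<in> X")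
    assume "i \<in> X" "j \<in> X" then have "X \<inter> {i,j} = {i,j}" by blast
    then show ?thesis using assms \<open>i \<in> X\<close> \<open>j \<in> X\<close> by simp
  next
    assume "i \<in> X" "j \<notin> X" then have "X \<inter> {i,j} = {i}" by blast
    then show ?thesis using \<open>i \<in> X\<close> \<open>j \<notin> X\<close> by simp
  next
    assume "i \<notin> X" "j \<in> X" then have "X \<inter> {i,j} = {j}" by blast
    then show ?thesis using \<open>i \<notin> X\<close> \<open>j \<in> X\<close> by simp
  next
    assume "i \<notin> X" "j \<notin> X" then have "X \<inter> {i,j} = {}" by blast
    then show ?thesis using \<open>i \<notin> X\<close> \<open>j \<notin> X\<close> by simp
  qed
  ultimately show ?thesis by simp
qed

lemma supp_new:
  fixes B :: "('n::finite) frame" and i j :: 'n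
  assumes ij: "i \<noteq> j"
  shows "Supp p (back_act (Cgate s t i j) B) =
     card ({k. lam (fst B k) p = 1 \<or> lam (snd B k) p = 1} - {i,j}) +
     nfun (lam (fst B i) p) (lam (snd B i) p) (lam (fst B j) p) (lam (snd B j) p) s t"
proof -
  define a where "a k = lam (fst B k) p" for k
  define b where "b k = lam (snd B k) p" for k
  define Ls where "Ls = xsg s * b i + zsg s * a i"
  define Lt where "Lt = xsg t * b j + zsg t * a j"
  have A: "lam (fst (back_act (Cgate s t i j) B) k) p =
      a k + (if k = j then xsg t else 0) * Ls + (if k = i then xsg s else 0) * Lt" for k
    by (simp add: back_act_def L_conj[OF ij] lam_Z vec_fst Lf_Z Lf_vec a_def b_def Ls_def Lt_def)
  have Bq: "lam (snd (back_act (Cgate s t i j) B) k) p =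
      b k + (if k = j then zsg t else 0) * Ls + (if k = i then zsg s else 0) * Lt" for k
    by (simp add: back_act_def L_conj[OF ij] lam_X vec_snd Lf_X Lf_vec a_def b_def Ls_def Lt_def)
  define D' where "D' = {k. lam (fst (back_act (Cgate s t i j) B) k) p = 1 \<or> lam (snd (back_act (Cgate s t i j) B) k) p = 1}"
  have "Supp p (back_act (Cgate s t i j) B) = card D'" by (simp add: Supp_def D'_def)
  also have "\<dots> = card (D' - {i,j}) + (if i \<in> D' then 1 else 0) + (if j \<in> D' then 1 else 0)"
    by (rule card_split) (simp_all add: ij)
  also have "D' - {i,j} = {k. a k = 1 \<or> b k = 1} - {i,j}"
    by (auto simp: D'_def A Bq)
  finally have F: "Supp p (back_act (Cgate s t i j) B) = card ({k. a k = 1 \<or> b k = 1} - {i,j}) +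
     ((if i \<in> D' then 1 else 0) + (if j \<in> D' then 1 else 0))" by simp
  have nf: "(if i \<in> D' then 1 else 0) + (if j \<in> D' then 1 else 0) = nfun (a i) (b i) (a j) (b j) s t"
    using ij by (simp add: D'_def A Bq nfun_def Let_def Ls_def Lt_def)
  show ?thesis using F unfolding nf by (simp add: a_def b_def)
qed

theorem mainTheorem6:
  fixes B :: "('n::finite) frame" and p :: "'n pauli" and i j :: 'n
  assumes "card (UNIV :: 'n set) \<ge> 2"
    and "is_frame B"
    and "i \<noteq> j"
    and "(lam (fst B i) p, lam (snd B i) p) \<noteq> (0, 0)"
    and "(lam (fst B j) p, lam (snd B j) p) \<noteq> (0, 0)"
  shows "card {(s, t). Supp p (back_act (Cgate s t i j) B) = Supp p B - 1} = 4
       \<and> card {(s, t). Supp p (back_act (Cgate s t i j) B) = Supp p B} = 5"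
proof -
  define D where "D = {k. lam (fst B k) p = 1 \<or> lam (snd B k) p = 1}"
  define R where "R = card (D - {i,j})"
  have iD: "i \<in> D" using assms(4) by (auto simp: D_def)
  have jD: "j \<in> D" using assms(5) by (auto simp: D_def)
  have S: "Supp p B = R + 2"
    using card_split[of D i j] assms(3) iD jD by (simp add: Supp_def D_def R_def)
  have N: "Supp p (back_act (Cgate s t i j) B) = R + nfun (lam (fst B i) p) (lam (snd B i) p) (lam (fst B j) p) (lam (snd B j) p) s t" for s t
    using supp_new[OF assms(3)] by (simp add: R_def D_def)
  have e1: "{(s, t). Supp p (back_act (Cgate s t i j) B) = Supp p B - 1} =
     {(s,t). nfun (lam (fst B i) p) (lam (snd B i) p) (lam (fst B j) p) (lam (snd B j) p) s t = 1}"
    by (auto simp: N S)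
  have e2: "{(s, t). Supp p (back_act (Cgate s t i j) B) = Supp p B} =
     {(s,t). nfun (lam (fst B i) p) (lam (snd B i) p) (lam (fst B j) p) (lam (snd B j) p) s t = 2}"
    by (auto simp: N S)
  show ?thesis unfolding e1 e2 by (rule count[OF assms(4) assms(5)])
qed



end
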